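(* Let $K,L,T$ be positive integers and $(\alpha,\beta)\in\mathcal{A}(K,L,T)$. Then $KL+K+L+2T-1-T\min\{K,L,T\}\le\operatorname{N}(\alpha,\beta)$. Consequently, for $\alpha_{\mathrm p}=(0,1,\ldots,K-1)$, $\alpha_{\mathrm s}=(KL)$, $\beta_{\mathrm p}=(0,K,\ldots,K(L-1))$ and $\beta_{\mathrm s}=(KL)$, the degree table $(\alpha_{\mathrm p},\alpha_{\mathrm s},\beta_{\mathrm p},\beta_{\mathrm s})\in\mathcal{A}(K,L,1)$ has the minimum value of $\operatorname{N}$ among all elements of $\mathcal{A}(K,L,1)$.
   Context: A degree table with parameters $K,L,T$ is a tuple $(\alpha_{\mathrm p},\alpha_{\mathrm s},\beta_{\mathrm p},\beta_{\mathrm s})$ of nonnegative integer vectors of lengths $K,T,L,T$ such that, with $\alpha=(\alpha_{\mathrm p}\mid\alpha_{\mathrm s})$, $\beta=(\beta_{\mathrm p}\mid\beta_{\mathrm s})$ (concatenations): (i) entries of $\alpha$ are distinct; (ii) entries of $\beta$ are distinct; (iii) for every integer $n\in\operatorname{Set}(\alpha_{\mathrm p})+\operatorname{Set}(\beta_{\mathrm p})$ there is a unique $i\in\operatorname{Set}(\alpha)$ and a unique $j\in\operatorname{Set}(\beta)$ with $n=i+j$. $\operatorname{Set}(v)$ is the set of entries of $v$, $A+B=\{a+b:a\in A,b\in B\}$, $\mathcal{A}(K,L,T)$ is the set of degree tables, and $\operatorname{N}(\alpha,\beta)=|\operatorname{Set}(\alpha)+\operatorname{Set}(\beta)|$. 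*)

theory Defs
  imports Main
begin

definition sumset :: "nat set \<Rightarrow> nat set \<Rightarrow> nat set" where
  "sumset A B = {a + b | a b. a \<in> A \<and> b \<in> B}"

definition degree_table ::
  "nat \<Rightarrow> nat \<Rightarrow> nat \<Rightarrow> nat list \<Rightarrow> nat list \<Rightarrow> nat list \<Rightarrow> nat list \<Rightarrow> bool" where
  "degree_table K L T ap as bp bs \<longleftrightarrow>
     length ap = K \<and> length as = T \<and> length bp = L \<and> length bs = T \<and>
     distinct (ap @ as) \<and> distinct (bp @ bs) \<and>
     (\<forall>n \<in> sumset (set ap) (set bp).
        \<exists>!ij. ij \<in> set (ap @ as) \<times> set (bp @ bs) \<and> fst ij + snd ij = n)"

definition N_count :: "nat list \<Rightarrow> nat list \<Rightarrow> nat" where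
  "N_count \<alpha> \<beta> = card (sumset (set \<alpha>) (set \<beta>))"

end

theory Submission
  imports Defs
begin


lemma sumset_img: "sumset X Y = (\<lambda>(a,b). a+b) ` (X \<times> Y)"
  unfolding sumset_def by force

lemma finite_sumset: "finite X \<Longrightarrow> finite Y \<Longrightarrow> finite (sumset X Y)"
  by (simp add: sumset_img)

lemma sumset_comm: "sumset X Y = sumset Y X"
  unfolding sumset_def by (auto; metis add.commute)

lemma sumset_card_ge:
  assumes "finite X" "finite Y" "X \<noteq> {}" "Y \<noteq> {}"
  shows "card X + card Y - 1 \<le> card (sumset X Y)"
  using assms(1,3)
proof (induct X rule: finite_linorder_max_induct)
  case empty then show ?case by simp
next
  case (insert b A)
  show ?case
  proof (cases "A = {}")
    case True
    have "sumset {b} Y = (\<lambda>y. b + y) ` Y" unfolding sumset_def by auto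
    moreover have "card ((\<lambda>y. b + y) ` Y) = card Y" by (simp add: card_image)
    ultimately show ?thesis using True by simp
  next
    case False
    have IH: "card A + card Y - 1 \<le> card (sumset A Y)" using insert False by simp
    have my: "Max Y \<in> Y" using assms by simp
    have notin: "b + Max Y \<notin> sumset A Y"
    proof
      assume "b + Max Y \<in> sumset A Y"
      then obtain a y where "a \<in> A" "y \<in> Y" "b + Max Y = a + y" unfolding sumset_def by auto
      moreover have "y \<le> Max Y" using \<open>y \<in> Y\<close> assms by simp
      ultimately show False using insert.hyps \<open>a \<in> A\<close> by fastforce
    qed
    have sub: "insert (b + Max Y) (sumset A Y) \<subseteq> sumset (insert b A) Y"
      using my unfolding sumset_def by blast
    have "card (insert (b + Max Y) (sumset A Y)) = Suc (card (sumset A Y))"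
      using notin finite_sumset[OF insert(1) assms(2)] by simp
    moreover have "card (insert (b + Max Y) (sumset A Y)) \<le> card (sumset (insert b A) Y)"
      by (rule card_mono[OF finite_sumset sub]) (use insert(1) assms(2) in auto)
    moreover have "card (insert b A) = Suc (card A)" using insert by auto
    moreover have "card A \<ge> 1" using False insert(1) by (simp add: Suc_leI card_gt_0_iff)
    ultimately show ?thesis using IH by linarith
  qed
qed


lemma main_bound:
  fixes Ap As Bp Bs :: "nat set"
  assumes fin: "finite Ap" "finite As" "finite Bp" "finite Bs"
    and cards: "card Ap = K" "card As = T" "card Bp = L" "card Bs = T"
    and T: "T > 0"
    and dA: "Ap \<inter> As = {}" and dB: "Bp \<inter> Bs = {}"
    and uniq: "\<And>a b x y. a \<in> Ap \<Longrightarrow> b \<in> Bp \<Longrightarrow> x \<in> Ap \<union> As \<Longrightarrow> y \<in> Bp \<union> Bs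
                 \<Longrightarrow> x + y = a + b \<Longrightarrow> x = a \<and> y = b"
  shows "K * L + L + 2 * T + K \<le> card (sumset (Ap \<union> As) (Bp \<union> Bs)) + min K (T * T) + 1"
proof -
  define A where "A = Ap \<union> As"
  define B where "B = Bp \<union> Bs"
  have finA: "finite A" and finB: "finite B" using fin by (auto simp: A_def B_def)
  have BsNE: "Bs \<noteq> {}" using T cards fin by auto
  have AsNE: "As \<noteq> {}" using T cards fin by auto
  obtain t0 where t0: "t0 \<in> Bs" using BsNE by auto
  define P where "P = sumset Ap Bp"
  define Q where "Q = sumset As B"
  define bad where "bad = {a \<in> Ap. a + t0 \<in> Q}"
  define R where "R = (\<lambda>a. a + t0) ` (Ap - bad)"
  have cardB: "card B = L + T" using cards fin dB by (simp add: B_def card_Un_disjoint)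
  have cP: "card P = K * L"
  proof -
    have "inj_on (\<lambda>(a,b). a+b) (Ap \<times> Bp)"
      by (rule inj_onI) (use uniq in auto)
    then have "card P = card (Ap \<times> Bp)" by (simp add: P_def sumset_img card_image)
    then show ?thesis using cards by (simp add: card_cartesian_product)
  qed
  have PQ: "P \<inter> Q = {}"
  proof (rule ccontr)
    assume "P \<inter> Q \<noteq> {}"
    then obtain a b s y where "a \<in> Ap" "b \<in> Bp" "s \<in> As" "y \<in> B" "a + b = s + y"
      unfolding P_def Q_def sumset_def by auto
    then show False using uniq[of a b s y] dA by (auto simp: B_def A_def)
  qed
  have PR: "P \<inter> R = {}"
  proof (rule ccontr)
    assume "P \<inter> R \<noteq> {}"
    then obtain a b a' where "a \<in> Ap" "b \<in> Bp" "a' \<in> Ap" "a' + t0 = a + b"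
      unfolding P_def R_def sumset_def by auto
    then show False using uniq[of a b a' t0] dB t0 by auto
  qed
  have QR: "Q \<inter> R = {}" unfolding R_def bad_def by auto
  have sub: "P \<union> Q \<union> R \<subseteq> sumset A B"
    unfolding P_def Q_def R_def A_def B_def sumset_def using t0 by blast
  have finPQR: "finite P" "finite Q" "finite R"
    using fin finB by (auto simp: P_def Q_def R_def finite_sumset)
  have cardQ: "T + (L + T) - 1 \<le> card Q"
    using sumset_card_ge[of As B] fin finB AsNE BsNE cards cardB by (auto simp: Q_def B_def)
  have cardR: "card R = K - card bad"
  proof -
    have "card R = card (Ap - bad)" unfolding R_def by (simp add: card_image)
    also have "\<dots> = K - card bad" using cards fin by (simp add: card_Diff_subset bad_def)
    finally show ?thesis .
  qed
  have badK: "card bad \<le> K" using cards fin by (auto simp: bad_def intro: card_mono)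
  have badT: "card bad \<le> T * T"
  proof -
    define bp where "bp s = {a \<in> Ap. \<exists>b\<in>Bp. a + t0 = s + b}" for s
    define bs where "bs s = (\<lambda>b. s + b - t0) ` (Bs - {t0})" for s
    have bsub: "bad \<subseteq> (\<Union>s\<in>As. bp s \<union> bs s)"
    proof
      fix a assume "a \<in> bad"
      then obtain s y where a: "a \<in> Ap" "s \<in> As" "y \<in> B" "a + t0 = s + y"
        unfolding bad_def Q_def sumset_def by auto
      show "a \<in> (\<Union>s\<in>As. bp s \<union> bs s)"
      proof (cases "y \<in> Bp")
        case True then show ?thesis using a by (auto simp: bp_def)
      next
        case False
        then have "y \<in> Bs" using a by (auto simp: B_def)
        moreover have "y \<noteq> t0" using a dA by auto
        ultimately have "a \<in> bs s" unfolding bs_def using a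
          by (intro image_eqI[of _ _ y]) auto
        then show ?thesis using a by auto
      qed
    qed
    have bp1: "card (bp s) \<le> 1" for s
    proof -
      have "finite (bp s)" using fin by (simp add: bp_def)
      moreover have "\<forall>a1\<in>bp s. \<forall>a2\<in>bp s. a1 = a2"
      proof (intro ballI)
        fix a1 a2 assume "a1 \<in> bp s" "a2 \<in> bp s"
        then obtain b1 b2 where h: "a1 \<in> Ap" "a2 \<in> Ap" "b1 \<in> Bp" "b2 \<in> Bp"
          "a1 + t0 = s + b1" "a2 + t0 = s + b2" by (auto simp: bp_def)
        then have "a2 + b1 = a1 + b2" by linarith
        then show "a1 = a2" using uniq[of a1 b2 a2 b1] h by auto
      qed
      ultimately show ?thesis using card_le_Suc0_iff_eq by auto
    qed
    have bs1: "card (bs s) \<le> T - 1" for s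
    proof -
      have "card (bs s) \<le> card (Bs - {t0})" unfolding bs_def by (rule card_image_le) (use fin in auto)
      also have "\<dots> = T - 1" using t0 fin cards by simp
      finally show ?thesis .
    qed
    have finU: "finite (\<Union>s\<in>As. bp s \<union> bs s)" using fin by (auto simp: bp_def bs_def)
    have "card bad \<le> card (\<Union>s\<in>As. bp s \<union> bs s)" by (rule card_mono[OF finU bsub])
    also have "\<dots> \<le> (\<Sum>s\<in>As. card (bp s \<union> bs s))" by (rule card_UN_le[OF fin(2)])
    also have "\<dots> \<le> (\<Sum>s\<in>As. T)"
    proof (rule sum_mono)
      fix s assume "s \<in> As"
      have "card (bp s \<union> bs s) \<le> card (bp s) + card (bs s)" by (rule card_Un_le)
      also have "\<dots> \<le> 1 + (T - 1)" using bp1[of s] bs1[of s] by linarith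
      finally show "card (bp s \<union> bs s) \<le> T" using T by simp
    qed
    also have "\<dots> = T * T" using cards by simp
    finally show ?thesis .
  qed
  have "card (P \<union> Q \<union> R) = card P + card Q + card R"
    using finPQR PQ PR QR by (simp add: card_Un_disjoint Int_Un_distrib2)
  moreover have "card (P \<union> Q \<union> R) \<le> card (sumset A B)"
    by (rule card_mono[OF finite_sumset[OF finA finB] sub])
  ultimately show ?thesis using cP cardQ cardR badK badT T unfolding A_def B_def
    by (auto simp: min_def split: if_splits)
qed

lemma dt_bound:
  assumes dt: "degree_table K L T ap as bp bs" and T: "T > 0"
  shows "K * L + L + 2 * T + K \<le> N_count (ap @ as) (bp @ bs) + min K (T * T) + 1"
    and "K * L + L + 2 * T + K \<le> N_count (ap @ as) (bp @ bs) + min L (T * T) + 1"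
proof -
  have len: "length ap = K" "length as = T" "length bp = L" "length bs = T"
    and dA: "distinct (ap @ as)" and dB: "distinct (bp @ bs)"
    and u: "\<forall>n \<in> sumset (set ap) (set bp).
        \<exists>!ij. ij \<in> set (ap @ as) \<times> set (bp @ bs) \<and> fst ij + snd ij = n"
    using dt unfolding degree_table_def by auto
  have cards: "card (set ap) = K" "card (set as) = T" "card (set bp) = L" "card (set bs) = T"
    using len dA dB by (auto simp: distinct_card)
  have disj: "set ap \<inter> set as = {}" "set bp \<inter> set bs = {}" using dA dB by auto
  have uniq: "x = a \<and> y = b" if "a \<in> set ap" "b \<in> set bp" "x \<in> set ap \<union> set as"
      "y \<in> set bp \<union> set bs" "x + y = a + b" for a b x y
  proof -
    have "a + b \<in> sumset (set ap) (set bp)" using that unfolding sumset_def by auto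
    then have "\<exists>!ij. ij \<in> set (ap @ as) \<times> set (bp @ bs) \<and> fst ij + snd ij = a + b" using u by blast
    moreover have "(a,b) \<in> set (ap @ as) \<times> set (bp @ bs) \<and> fst (a,b) + snd (a,b) = a + b"
      using that by auto
    moreover have "(x,y) \<in> set (ap @ as) \<times> set (bp @ bs) \<and> fst (x,y) + snd (x,y) = a + b"
      using that by auto
    ultimately have "(x,y) = (a,b)" by blast
    then show ?thesis by simp
  qed
  have N: "N_count (ap @ as) (bp @ bs) = card (sumset (set ap \<union> set as) (set bp \<union> set bs))"
    by (simp add: N_count_def)
  show "K * L + L + 2 * T + K \<le> N_count (ap @ as) (bp @ bs) + min K (T * T) + 1"
    unfolding N by (rule main_bound[OF _ _ _ _ cards T disj uniq]) auto
  have "L * K + K + 2 * T + L \<le> card (sumset (set bp \<union> set bs) (set ap \<union> set as)) + min L (T * T) + 1"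
    by (rule main_bound[OF _ _ _ _ cards(3,4,1,2) T disj(2,1)]) (use uniq in auto)
  then show "K * L + L + 2 * T + K \<le> N_count (ap @ as) (bp @ bs) + min L (T * T) + 1"
    unfolding N by (simp add: sumset_comm[of "set bp \<union> set bs"] mult.commute add.commute add.left_commute)
qed

lemma min_arith:
  fixes K L T :: nat assumes "T > 0"
  shows "min K (T*T) \<le> T * min K (min L T) \<or> min L (T*T) \<le> T * min K (min L T)"
proof -
  consider "min K (min L T) = K" | "min K (min L T) = L" | "min K (min L T) = T"
    by (cases "K \<le> L"; cases "L \<le> T"; cases "K \<le> T") (auto simp: min_def)
  then show ?thesis
  proof cases
    case 1
    have "min K (T*T) \<le> K" by simp
    also have "K \<le> T * K" using assms by simp
    finally show ?thesis using 1 by simp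
  next
    case 2
    have "min L (T*T) \<le> L" by simp
    also have "L \<le> T * L" using assms by simp
    finally show ?thesis using 2 by simp
  next
    case 3
    have "min K (T*T) \<le> T * T" by simp
    then show ?thesis using 3 by simp
  qed
qed

lemma example_dt:
  fixes K L :: nat assumes K: "K > 0" and L: "L > 0"
  shows "degree_table K L 1 [0..<K] [K * L] (map (\<lambda>i. K * i) [0..<L]) [K * L]"
proof -
  have KL: "K \<le> K * L" using L by simp
  have d1: "distinct ([0..<K] @ [K * L])" using KL by auto
  have d2: "distinct (map (\<lambda>i. K * i) [0..<L] @ [K * L])"
    using K by (auto simp: distinct_map inj_on_def)
  have key: "x = i \<and> j' = j" if "x < K" "i < K" "x + K * j' = i + K * j" for x i j j'
  proof -
    have "x = (x + K * j') mod K" using that(1) by simp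
    also have "\<dots> = (i + K * j) mod K" using that(3) by simp
    also have "\<dots> = i" using that(2) by simp
    finally have "x = i" .
    then show ?thesis using that K by simp
  qed
  have u: "\<exists>!ij. ij \<in> set ([0..<K] @ [K * L]) \<times> set (map (\<lambda>i. K * i) [0..<L] @ [K * L])
            \<and> fst ij + snd ij = n" if hn: "n \<in> sumset (set [0..<K]) (set (map (\<lambda>i. K * i) [0..<L]))" for n
  proof -
    obtain i j where ij: "i < K" "j < L" "n = i + K * j" using hn unfolding sumset_def by fastforce
    have nlt: "n < K * L"
    proof -
      have "i + K * j < K + K * j" using ij by simp
      also have "\<dots> = K * (j + 1)" by simp
      also have "\<dots> \<le> K * L" using ij by (intro mult_le_mono2) simp
      finally show ?thesis using ij by simp
    qed
    show ?thesis
    proof (rule ex1I[of _ "(i, K * j)"])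
      show "(i, K * j) \<in> set ([0..<K] @ [K * L]) \<times> set (map (\<lambda>i. K * i) [0..<L] @ [K * L])
            \<and> fst (i, K * j) + snd (i, K * j) = n" using ij by auto
    next
      fix ij' assume h: "ij' \<in> set ([0..<K] @ [K * L]) \<times> set (map (\<lambda>i. K * i) [0..<L] @ [K * L])
            \<and> fst ij' + snd ij' = n"
      obtain x y where xy: "ij' = (x, y)" by force
      have "x \<noteq> K * L" "y \<noteq> K * L" using h xy nlt by auto
      then obtain j' where "x < K" "y = K * j'" using h xy by auto
      then show "ij' = (i, K * j)" using key[of x i j' j] h xy ij by auto
    qed
  qed
  show ?thesis unfolding degree_table_def using d1 d2 u by simp
qed

lemma example_N:
  fixes K L :: nat assumes K: "K > 0" and L: "L > 0"
  shows "N_count ([0..<K] @ [K * L]) (map (\<lambda>i. K * i) [0..<L] @ [K * L]) \<le> K * L + K + L"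
proof -
  let ?S = "sumset (set ([0..<K] @ [K * L])) (set (map (\<lambda>i. K * i) [0..<L] @ [K * L]))"
  have sub: "?S \<subseteq> {0..<K * L + K} \<union> (\<lambda>j. K * L + K * j) ` {1..<L} \<union> {2 * K * L}"
  proof
    fix n assume "n \<in> ?S"
    then obtain x y where h: "x \<in> set ([0..<K] @ [K * L])" "y \<in> set (map (\<lambda>i. K * i) [0..<L] @ [K * L])"
      "n = x + y" unfolding sumset_def by auto
    show "n \<in> {0..<K * L + K} \<union> (\<lambda>j. K * L + K * j) ` {1..<L} \<union> {2 * K * L}"
    proof (cases "x = K * L")
      case True
      show ?thesis
      proof (cases "y = K * L")
        case True then show ?thesis using h \<open>x = K * L\<close> by simp
      next
        case False
        then obtain j where j: "j < L" "y = K * j" using h by auto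
        show ?thesis
        proof (cases "j = 0")
          case True then show ?thesis using h j \<open>x = K * L\<close> K by simp
        next
          case False then show ?thesis using h j \<open>x = K * L\<close> by auto
        qed
      qed
    next
      case False
      then have xK: "x < K" using h by auto
      show ?thesis
      proof (cases "y = K * L")
        case True then show ?thesis using h xK by simp
      next
        case False
        then obtain j where j: "j < L" "y = K * j" using h by auto
        have "x + K * j < K + K * j" using xK by simp
        also have "\<dots> = K * (j + 1)" by simp
        also have "\<dots> \<le> K * L" using j by (intro mult_le_mono2) simp
        finally show ?thesis using h j by simp
      qed
    qed
  qed
  have "card ?S \<le> card ({0..<K * L + K} \<union> (\<lambda>j. K * L + K * j) ` {1..<L} \<union> {2 * K * L})"
    by (rule card_mono[OF _ sub]) simp
  also have "\<dots> \<le> card {0..<K * L + K} + card ((\<lambda>j. K * L + K * j) ` {1..<L}) + card {2 * K * L}"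
    by (meson add_mono card_Un_le le_refl order_trans)
  also have "\<dots> \<le> (K * L + K) + (L - 1) + 1"
    using card_image_le[of "{1..<L}" "\<lambda>j. K * L + K * j"] by simp
  finally show ?thesis unfolding N_count_def using L by simp
qed

theorem theorem5:
  fixes K L T :: nat
  assumes "K > 0" and "L > 0" and "T > 0"
  shows "(\<forall>ap as bp bs. degree_table K L T ap as bp bs \<longrightarrow>
            int (K * L + K + L + 2 * T) - 1 - int (T * min K (min L T))
              \<le> int (N_count (ap @ as) (bp @ bs)))
       \<and> degree_table K L 1 [0..<K] [K * L] (map (\<lambda>i. K * i) [0..<L]) [K * L]
       \<and> (\<forall>ap as bp bs. degree_table K L 1 ap as bp bs \<longrightarrow>
            N_count ([0..<K] @ [K * L]) (map (\<lambda>i. K * i) [0..<L] @ [K * L])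
              \<le> N_count (ap @ as) (bp @ bs))"
proof (intro conjI allI impI)
  fix ap as bp bs assume dt: "degree_table K L T ap as bp bs"
  note b1 = dt_bound(1)[OF dt assms(3)] and b2 = dt_bound(2)[OF dt assms(3)]
  have "K * L + K + L + 2 * T \<le> N_count (ap @ as) (bp @ bs) + T * min K (min L T) + 1"
    using min_arith[OF assms(3), of K L]
  proof
    assume "min K (T*T) \<le> T * min K (min L T)" then show ?thesis using b1 by linarith
  next
    assume "min L (T*T) \<le> T * min K (min L T)" then show ?thesis using b2 by linarith
  qed
  then show "int (K * L + K + L + 2 * T) - 1 - int (T * min K (min L T))
              \<le> int (N_count (ap @ as) (bp @ bs))" by linarith
next
  show "degree_table K L 1 [0..<K] [K * L] (map (\<lambda>i. K * i) [0..<L]) [K * L]"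
    by (rule example_dt[OF assms(1,2)])
next
  fix ap as bp bs assume dt: "degree_table K L 1 ap as bp bs"
  have "K * L + L + 2 * 1 + K \<le> N_count (ap @ as) (bp @ bs) + min K (1 * 1) + 1"
    by (rule dt_bound(1)[OF dt]) simp
  then have "K * L + K + L \<le> N_count (ap @ as) (bp @ bs)" using assms by simp
  then show "N_count ([0..<K] @ [K * L]) (map (\<lambda>i. K * i) [0..<L] @ [K * L])
              \<le> N_count (ap @ as) (bp @ bs)" using example_N[OF assms(1,2)] by linarith
qed

end
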